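(* The word complexity function $\mathcal{C}$ of $\mathrm{Sub}_\tau$ satisfies $\mathcal{C}(1)=4$, $\mathcal{C}(2)=6$, $\mathcal{C}(3)=8$. Moreover, for every integer $n\geq 2$ and every $L=2^n+k$ with $0\le k<2^n$, $$\mathcal{C}(L)=\begin{cases} 2^{n+1}+2^{n-1}+3k, & 0\le k<2^{n-1},\\ 2^{n+1}+2^{n}+2k, & 2^{n-1}\le k<2^{n}.\end{cases}$$
   Context: Let $\mathcal{A}=\{a,x,y,z\}$ and let $\tau$ be the substitution (monoid morphism on finite words over $\mathcal{A}$) defined by $\tau(a)=axa$, $\tau(x)=y$, $\tau(y)=z$, $\tau(z)=x$. For a finite word $w$, $\mathrm{Sub}(w)$ denotes the set of finite (contiguous) subwords of $w$. Let $\mathrm{Sub}_\tau=\bigcup_{s\in\mathcal{A},\,n\in\mathbb{N}\cup\{0\}}\mathrm{Sub}(\tau^n(s))$. The word complexity is $\mathcal{C}(L)=$ the number of elements of $\mathrm{Sub}_\tau$ of length $L$. *)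

theory Defs
  imports Main "HOL-Library.Sublist"
begin

datatype letter = A | X | Y | Z

fun tau_letter :: "letter \<Rightarrow> letter list" where
  "tau_letter A = [A, X, A]"
| "tau_letter X = [Y]"
| "tau_letter Y = [Z]"
| "tau_letter Z = [X]"

definition tau :: "letter list \<Rightarrow> letter list" where
  "tau w = concat (map tau_letter w)"

definition Sub :: "'a list \<Rightarrow> 'a list set" where
  "Sub w = {u. sublist u w}"

definition Sub_tau :: "letter list set" where
  "Sub_tau = (\<Union>s. \<Union>n::nat. Sub ((tau ^^ n) [s]))"

definition complexity :: "nat \<Rightarrow> nat" where
  "complexity L = card {w \<in> Sub_tau. length w = L}"

end

theory Submission
  imports Defs
begin


fun v2 :: "nat \<Rightarrow> nat" where
  "v2 n = (if n = 0 \<or> odd n then 0 else Suc (v2 (n div 2)))"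

declare v2.simps[simp del]

lemma v2_mult_pow: "odd m \<Longrightarrow> v2 (2^k * m) = k"
proof (induction k)
  case 0 then show ?case by (simp add: v2.simps)
next
  case (Suc k)
  have "2^Suc k * m = 2 * (2^k*m)" by simp
  moreover have "2 * (2^k*m) \<noteq> 0" using Suc.prems by (auto elim: oddE)
  ultimately show ?case using Suc by (subst v2.simps) simp
qed

lemma v2_eqI: "x = 2^k * m \<Longrightarrow> odd m \<Longrightarrow> v2 x = k"
  using v2_mult_pow by simp

lemma v2_decomp: "x > 0 \<Longrightarrow> \<exists>m. odd m \<and> x = 2^(v2 x) * m"
proof (induction x rule: less_induct)
  case (less x)
  show ?case
  proof (cases "odd x")
    case True then show ?thesis by (auto simp: v2.simps)
  next
    case False
    then obtain y where y: "x = 2*y" by (auto elim: evenE)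
    with less.prems have "y > 0" "y < x" by auto
    with less.IH obtain m where "odd m" "y = 2^(v2 y)*m" by blast
    moreover have "v2 x = Suc (v2 y)" using y \<open>y>0\<close> by (subst v2.simps) simp
    ultimately show ?thesis using y by auto
  qed
qed

lemma v2_pow[simp]: "v2 (2^k) = k"
  using v2_mult_pow[of 1 k] by simp

lemma v2_dvd_ge: assumes "x > 0" "2^k dvd x" shows "k \<le> v2 x"
proof (rule ccontr)
  assume "\<not> k \<le> v2 x"
  then have "Suc (v2 x) \<le> k" by simp
  then have "(2::nat)^Suc (v2 x) dvd 2^k" by (rule le_imp_power_dvd)
  with assms have d: "2^Suc (v2 x) dvd x" using dvd_trans by blast
  obtain m where m: "odd m" "x = 2^(v2 x)*m" using v2_decomp assms(1) by blast
  from d m have "2^v2 x * 2 dvd 2^v2 x * m" by (simp add: mult.commute)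
  then have "2 dvd m" using nat_mult_dvd_cancel1[of "2^v2 x" 2 m] by simp
  with m show False by simp
qed

lemma v2_ge_dvd: assumes "x > 0" "k \<le> v2 x" shows "2^k dvd x"
proof -
  obtain m where m: "odd m" "x = 2^(v2 x)*m" using v2_decomp assms(1) by blast
  have "(2::nat)^k dvd 2^(v2 x)" using assms(2) by (simp add: le_imp_power_dvd)
  then show ?thesis using m by (metis dvd_mult2)
qed

lemma v2_sub_less: assumes "0 < a" "0 < b" "v2 a < v2 b" "b < a" shows "v2 (a - b) = v2 a"
proof -
  obtain \<alpha> where a: "odd \<alpha>" "a = 2^v2 a * \<alpha>" using v2_decomp assms(1) by blast
  obtain \<beta> where b: "odd \<beta>" "b = 2^v2 b * \<beta>" using v2_decomp assms(2) by blast
  define \<gamma> where "\<gamma> = 2^(v2 b - v2 a - 1) * \<beta>"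
  have "(2::nat)^v2 b = 2^v2 a * (2 * 2^(v2 b - v2 a - 1))"
    using assms(3) by (simp flip: power_add power_Suc)
  then have bb: "b = 2^v2 a * (2*\<gamma>)" using b by (simp add: \<gamma>_def)
  have "2*\<gamma> < \<alpha>" using assms(4) a bb by (metis mult_less_cancel1)
  have "a - b = 2^v2 a * (\<alpha> - 2*\<gamma>)" using a bb by (simp add: diff_mult_distrib2)
  moreover have "odd (\<alpha> - 2*\<gamma>)" using a(1) \<open>2*\<gamma> < \<alpha>\<close> by presburger
  ultimately show ?thesis by (rule v2_eqI)
qed

lemma v2_sub_less2: assumes "0 < a" "0 < b" "v2 a < v2 b" "a < b" shows "v2 (b - a) = v2 a"
proof -
  obtain \<alpha> where a: "odd \<alpha>" "a = 2^v2 a * \<alpha>" using v2_decomp assms(1) by blast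
  obtain \<beta> where b: "odd \<beta>" "b = 2^v2 b * \<beta>" using v2_decomp assms(2) by blast
  define \<gamma> where "\<gamma> = 2^(v2 b - v2 a - 1) * \<beta>"
  have "(2::nat)^v2 b = 2^v2 a * (2 * 2^(v2 b - v2 a - 1))"
    using assms(3) by (simp flip: power_add power_Suc)
  then have bb: "b = 2^v2 a * (2*\<gamma>)" using b by (simp add: \<gamma>_def)
  have "\<alpha> < 2*\<gamma>" using assms(4) a bb by (metis mult_less_cancel1)
  have "b - a = 2^v2 a * (2*\<gamma> - \<alpha>)" using a bb by (simp add: diff_mult_distrib2)
  moreover have "odd (2*\<gamma> - \<alpha>)" using a(1) \<open>\<alpha> < 2*\<gamma>\<close> by presburger
  ultimately show ?thesis by (rule v2_eqI)
qed

lemma v2_add_less: assumes "0 < a" "0 < b" "v2 a < v2 b" shows "v2 (a + b) = v2 a"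
proof -
  obtain \<alpha> where a: "odd \<alpha>" "a = 2^v2 a * \<alpha>" using v2_decomp assms(1) by blast
  obtain \<beta> where b: "odd \<beta>" "b = 2^v2 b * \<beta>" using v2_decomp assms(2) by blast
  define \<gamma> where "\<gamma> = 2^(v2 b - v2 a - 1) * \<beta>"
  have "(2::nat)^v2 b = 2^v2 a * (2 * 2^(v2 b - v2 a - 1))"
    using assms(3) by (simp flip: power_add power_Suc)
  then have bb: "b = 2^v2 a * (2*\<gamma>)" using b by (simp add: \<gamma>_def)
  have "a + b = 2^v2 a * (\<alpha> + 2*\<gamma>)" using a bb by (simp add: add_mult_distrib2)
  moreover have "odd (\<alpha> + 2*\<gamma>)" using a(1) by presburger
  ultimately show ?thesis by (rule v2_eqI)
qed

lemma v2_pow_add: "0 < s \<Longrightarrow> s < 2^e \<Longrightarrow> v2 (2^e + s) = v2 s"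
proof -
  assume s: "0 < s" "s < 2^e"
  have "2^v2 s \<le> s" using v2_decomp[OF s(1)] by (metis dvd_imp_le dvd_triv_left s(1))
  then have "v2 s < e" using s(2) by (metis le_less_trans power_less_imp_less_exp one_less_numeral_iff semiring_norm(76))
  then show ?thesis using v2_add_less[of s "2^e"] s by (simp add: add.commute)
qed

lemma v2_pow_sub: "0 < s \<Longrightarrow> s < 2^e \<Longrightarrow> v2 (2^e - s) = v2 s"
proof -
  assume s: "0 < s" "s < 2^e"
  have "2^v2 s \<le> s" using v2_decomp[OF s(1)] by (metis dvd_imp_le dvd_triv_left s(1))
  then have "v2 s < e" using s(2) by (metis le_less_trans power_less_imp_less_exp one_less_numeral_iff semiring_norm(76))
  then show ?thesis using v2_sub_less2[of s "2^e"] s by simp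
qed



definition cyc :: "nat \<Rightarrow> letter" where
  "cyc m = (if m mod 3 = 0 then X else if m mod 3 = 1 then Y else Z)"

fun gl :: "nat \<Rightarrow> letter" where
  "gl 0 = A" | "gl (Suc m) = cyc m"

definition uw :: "nat \<Rightarrow> letter" where "uw i = gl (v2 (Suc i))"

definition fac :: "nat \<Rightarrow> nat \<Rightarrow> letter list" where "fac L p = map uw [p..<p+L]"

lemma cyc_neq_A: "cyc m \<noteq> A" by (simp add: cyc_def)

lemma cyc_Suc_neq: "cyc (Suc m) \<noteq> cyc m"
  by (simp add: cyc_def mod_Suc)

lemma gl_neq_A: "e \<ge> 1 \<Longrightarrow> gl e \<noteq> A"
  by (cases e) (auto simp: cyc_neq_A)

lemma gl_Suc_neq: "e \<ge> 1 \<Longrightarrow> gl (Suc e) \<noteq> gl e"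
  by (cases e) (auto simp: cyc_Suc_neq)

lemma tau_append: "tau (xs @ ys) = tau xs @ tau ys" by (simp add: tau_def)

lemma taun_append: "(tau ^^ n) (xs @ ys) = (tau ^^ n) xs @ (tau ^^ n) ys"
  by (induction n) (simp_all add: tau_append)

lemma tau_single: "tau [c] = tau_letter c" by (simp add: tau_def)

lemma tau_cyc: "tau [cyc n] = [cyc (Suc n)]"
  by (auto simp: tau_def cyc_def mod_Suc)

lemma taun_X: "(tau ^^ n) [X] = [cyc n]"
proof (induction n)
  case 0 then show ?case by (simp add: cyc_def)
next
  case (Suc n) then show ?case by (simp add: tau_cyc)
qed

lemma taun_letter: "c \<noteq> A \<Longrightarrow> \<exists>c'. (tau ^^ n) [c] = [c'] \<and> c' \<noteq> A"
proof (induction n)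
  case 0 then show ?case by simp
next
  case (Suc n)
  then obtain c' where "(tau ^^ n) [c] = [c']" "c' \<noteq> A" by blast
  then have "(tau ^^ Suc n) [c] = tau [c']" by simp
  moreover have "\<exists>c''. tau [c'] = [c''] \<and> c'' \<noteq> A"
    using \<open>c' \<noteq> A\<close> by (cases c') (auto simp: tau_single)
  ultimately show ?case by simp
qed

lemma uw_shift: "i < 2^Suc n - 1 \<Longrightarrow> uw (2^Suc n + i) = uw i"
  unfolding uw_def using v2_pow_add[of "Suc i" "Suc n"] by simp

lemma taun_A: "(tau ^^ n) [A] = map uw [0..<2^Suc n - 1]"
proof (induction n)
  case 0 then show ?case by (simp add: uw_def v2.simps)
next
  case (Suc n)
  define N :: nat where "N = 2^Suc n - 1"
  have "(tau ^^ Suc n) [A] = (tau ^^ n) ([A] @ [X] @ [A])"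
    by (simp only: funpow_Suc_right o_apply tau_single) simp
  also have "\<dots> = map uw [0..<N] @ [cyc n] @ map uw [0..<N]"
    by (simp only: taun_append taun_X Suc.IH N_def)
  also have "\<dots> = map uw [0..<2^Suc (Suc n) - 1]"
  proof (rule nth_equalityI)
    have p: "(2::nat)^Suc (Suc n) - 1 = N + 1 + N"
    proof -
      have "(2::nat)^Suc n \<ge> 1" by simp
      then show ?thesis by (simp add: N_def)
    qed
    show "length (map uw [0..<N] @ [cyc n] @ map uw [0..<N]) = length (map uw [0..<2 ^ Suc (Suc n) - 1])"
      using p by simp
    fix i assume "i < length (map uw [0..<N] @ [cyc n] @ map uw [0..<N])"
    then have i: "i < N + 1 + N" by simp
    have uN: "uw N = cyc n" unfolding uw_def N_def using v2_pow[of "Suc n"] by (simp del: v2_pow power_Suc)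
    have R: "map uw [0..<2 ^ Suc (Suc n) - 1] ! i = uw i"
      using i p by (simp del: upt_Suc power_Suc)
    show "(map uw [0..<N] @ [cyc n] @ map uw [0..<N]) ! i = map uw [0..<2 ^ Suc (Suc n) - 1] ! i"
    proof -
      consider "i < N" | "i = N" | "N < i" by linarith
      then show ?thesis
      proof cases
        case 1 then show ?thesis unfolding R by (simp add: nth_append del: upt_Suc)
      next
        case 2
        have e: "(map uw [0..<N] @ [cyc n] @ map uw [0..<N]) ! N = cyc n"
          using nth_append_length[of "map uw [0..<N]" "cyc n"] by simp
        show ?thesis unfolding 2 by (simp only: R[unfolded 2] uN e)
      next
        case 3
        define t where "t = i - Suc N"
        have t: "i = N + Suc t" "t < N" using i 3 unfolding t_def by linarith+
        have s1: "uw i = uw t" using uw_shift[of t n] t unfolding N_def by (simp add: add.commute)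
        have s2: "(map uw [0..<N] @ [cyc n] @ map uw [0..<N]) ! i = map uw [0..<N] ! t"
          unfolding t(1) using nth_append_length_plus[of "map uw [0..<N]" "[cyc n] @ map uw [0..<N]" "Suc t"]
          by (simp del: upt_Suc)
        show ?thesis unfolding R s2 s1 using t(2) by (simp del: upt_Suc)
      qed
    qed
  qed
  finally show ?case .
qed



lemma sublist_map_upt: "sublist xs (map f [0..<M]) \<Longrightarrow> \<exists>p. xs = map f [p..<p + length xs]"
proof -
  assume "sublist xs (map f [0..<M])"
  then obtain ps ss where e: "map f [0..<M] = ps @ xs @ ss" by (auto simp: sublist_def)
  have len: "length ps + length xs \<le> M" using arg_cong[OF e, of length] by simp
  have "xs = take (length xs) (drop (length ps) (map f [0..<M]))" using e by simp
  also have "\<dots> = map f [length ps..<length ps + length xs]"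
    using len by (simp add: take_map drop_map)
  finally show ?thesis by blast
qed

lemma sublist_fac: "p + L \<le> M \<Longrightarrow> sublist (map f [p..<p+L]) (map f [0..<M])"
proof -
  assume a: "p + L \<le> M"
  have e1: "[0..<M] = [0..<p+L] @ [p+L..<M]"
    using upt_add_eq_append[of 0 "p+L" "M-(p+L)"] a by simp
  have e2: "[0..<p+L] = [0..<p] @ [p..<p+L]" using upt_add_eq_append[of 0 p L] by simp
  have "[0..<M] = [0..<p] @ [p..<p+L] @ [p+L..<M]" using e1 e2 by simp
  then have "map f [0..<M] = map f [0..<p] @ map f [p..<p+L] @ map f [p+L..<M]" by simp
  then show ?thesis unfolding sublist_def by blast
qed

lemma sublist_single: "sublist xs [c] \<Longrightarrow> xs = [] \<or> xs = [c]"
  by (auto simp: sublist_def Cons_eq_append_conv append_eq_Cons_conv)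

lemma uw1: "uw 1 = X"
proof -
  have e: "Suc 1 = 2^1" by simp
  have "v2 (Suc 1) = 1" by (simp only: e v2_pow)
  moreover have "gl 1 = X" by (simp add: cyc_def)
  ultimately show ?thesis unfolding uw_def by (simp only:)
qed

lemma uw3: "uw 3 = Y"
proof -
  have e: "Suc 3 = 2^2" by simp
  have "v2 (Suc 3) = 2" by (simp only: e v2_pow)
  moreover have "gl 2 = Y" unfolding numeral_2_eq_2 by (simp add: cyc_def)
  ultimately show ?thesis unfolding uw_def by (simp only:)
qed

lemma uw7: "uw 7 = Z"
proof -
  have e: "Suc 7 = 2^3" by simp
  have "v2 (Suc 7) = 3" by (simp only: e v2_pow)
  moreover have "gl 3 = Z" unfolding numeral_3_eq_3 by (simp add: cyc_def)
  ultimately show ?thesis unfolding uw_def by (simp only:)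
qed

lemma fac1: "fac 1 p = [uw p]" by (simp add: fac_def)

lemma Sub_tau_len: assumes "L \<ge> 1" shows "{w \<in> Sub_tau. length w = L} = range (fac L)"
proof
  show "{w \<in> Sub_tau. length w = L} \<subseteq> range (fac L)"
  proof
    fix w assume "w \<in> {w \<in> Sub_tau. length w = L}"
    then obtain s n where w: "sublist w ((tau ^^ n) [s])" "length w = L"
      by (auto simp: Sub_tau_def Sub_def)
    show "w \<in> range (fac L)"
    proof (cases "s = A")
      case True
      then have "sublist w (map uw [0..<2^Suc n - 1])" using w taun_A by simp
      then obtain p where "w = map uw [p..<p + length w]" using sublist_map_upt by blast
      then show ?thesis using w(2) by (auto simp: fac_def)
    next
      case False
      then obtain c where c: "(tau ^^ n) [s] = [c]" "c \<noteq> A" using taun_letter by blast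
      then have "w = [c]" using w assms sublist_single by fastforce
      then have L1: "L = 1" using w by simp
      have "\<exists>p. c = uw p"
        using c(2) uw1 uw3 uw7 by (cases c) metis+
      then show ?thesis using \<open>w = [c]\<close> L1 fac1 by auto
    qed
  qed
next
  show "range (fac L) \<subseteq> {w \<in> Sub_tau. length w = L}"
  proof
    fix w assume "w \<in> range (fac L)"
    then obtain p where p: "w = fac L p" by blast
    have "p + L < 2^(p+L)" by (rule less_exp)
    then have "p + L \<le> 2^Suc (p+L) - 1" by (simp only: power_Suc)
    then have "sublist w ((tau ^^ (p+L)) [A])" unfolding p fac_def taun_A by (rule sublist_fac)
    then have "w \<in> Sub_tau" unfolding Sub_tau_def Sub_def by blast
    then show "w \<in> {w \<in> Sub_tau. length w = L}" using p by (simp add: fac_def)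
  qed
qed



definition Wd :: "nat \<Rightarrow> nat \<times> letter \<Rightarrow> letter list" where
  "Wd L x = map (\<lambda>j. if j = fst x then snd x else gl (v2 (if j < fst x then fst x - j else j - fst x))) [0..<L]"

lemma Wd_nth: "j < L \<Longrightarrow> Wd L (r,c) ! j = (if j = r then c else gl (v2 (if j < r then r - j else j - r)))"
  by (simp add: Wd_def)

lemma length_Wd[simp]: "length (Wd L x) = L" by (simp add: Wd_def)

lemma fac_nth: "j < L \<Longrightarrow> fac L p ! j = gl (v2 (Suc p + j))"
  by (simp add: fac_def uw_def)

lemma length_fac[simp]: "length (fac L p) = L" by (simp add: fac_def)

lemma dvd_window: assumes "a < b" "(2::nat)^M dvd a" "2^M dvd b"
  shows "\<exists>c. a \<le> c \<and> c \<le> b \<and> 2^Suc M dvd c"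
proof -
  obtain \<alpha> where a: "a = 2^M * \<alpha>" using assms(2) by blast
  obtain \<beta> where b: "b = 2^M * \<beta>" using assms(3) by blast
  have "\<alpha> < \<beta>" using assms(1) a b by (metis mult_less_cancel1)
  show ?thesis
  proof (cases "even \<alpha>")
    case True
    then obtain \<gamma> where "\<alpha> = 2*\<gamma>" by blast
    then have "2^Suc M dvd a" using a by simp
    then show ?thesis using assms(1) by auto
  next
    case False
    then have "even (\<alpha> + 1)" by simp
    then obtain \<gamma> where g: "\<alpha> + 1 = 2*\<gamma>" by (rule evenE)
    have "\<alpha>+1 \<le> \<beta>" using \<open>\<alpha> < \<beta>\<close> by simp
    then have "2^M * (\<alpha>+1) \<le> 2^M * \<beta>" by (rule mult_le_mono2)
    moreover have "2^Suc M dvd 2^M * (\<alpha>+1)" using g by simp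
    moreover have "a \<le> 2^M * (\<alpha>+1)" using a by simp
    ultimately show ?thesis using b by blast
  qed
qed

lemma letter_XYZ: "c \<noteq> A \<Longrightarrow> c \<in> {X,Y,Z}" by (cases c) auto

lemma fac_in_Wd: assumes L: "L \<ge> 2" shows "fac L p \<in> Wd L ` ({0..<L} \<times> {X,Y,Z})"
proof -
  define f where "f j = v2 (Suc p + j)" for j
  define M where "M = Max (f ` {..<L})"
  have fin: "finite (f ` {..<L})" by simp
  have ne: "f ` {..<L} \<noteq> {}" using L by (auto simp: lessThan_empty_iff)
  obtain j0 where j0: "j0 < L" "f j0 = M" using Max_in[OF fin ne] unfolding M_def by auto
  have le: "f j \<le> M" if "j < L" for j using Max_ge[OF fin] that unfolding M_def by auto
  have uniq: "f j < M" if j: "j < L" "j \<noteq> j0" for j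
  proof (rule ccontr)
    assume "\<not> f j < M"
    then have fj: "M \<le> f j" by simp
    define a where "a = Suc p + min j j0"
    define b where "b = Suc p + max j j0"
    have ab: "a < b" using j unfolding a_def b_def by linarith
    have da: "2^M dvd a"
      using v2_ge_dvd[of a M] fj j0 unfolding a_def f_def by (cases "j \<le> j0") (auto simp: min_def)
    have db: "2^M dvd b"
      using v2_ge_dvd[of b M] fj j0 unfolding b_def f_def by (cases "j \<le> j0") (auto simp: max_def)
    obtain c where c: "a \<le> c" "c \<le> b" "2^Suc M dvd c" using dvd_window[OF ab da db] by blast
    have cpos: "c > 0" using c(1) unfolding a_def by simp
    have "Suc M \<le> v2 c" using v2_dvd_ge[OF cpos c(3)] .
    moreover have "c - Suc p < L" using c j j0 unfolding a_def b_def by auto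
    moreover have "c = Suc p + (c - Suc p)" using c(1) unfolding a_def by simp
    ultimately have "Suc M \<le> f (c - Suc p)" unfolding f_def by simp
    with le[OF \<open>c - Suc p < L\<close>] show False by simp
  qed
  have M1: "M \<ge> 1"
  proof -
    obtain j where j: "j < 2" "even (Suc p + j)" by (metis One_nat_def add_0_right add_Suc_right even_Suc lessI less_2_cases_iff)
    have "1 \<le> f j" unfolding f_def using v2_dvd_ge[of "Suc p + j" 1] j by auto
    then show ?thesis using le[of j] j L by simp
  qed
  have "fac L p = Wd L (j0, gl M)"
  proof (rule nth_equalityI)
    show "length (fac L p) = length (Wd L (j0, gl M))" by simp
    fix j assume "j < length (fac L p)"
    then have j: "j < L" by simp
    show "fac L p ! j = Wd L (j0, gl M) ! j"
    proof (cases "j = j0")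
      case True then show ?thesis using j j0 by (simp add: fac_nth Wd_nth f_def)
    next
      case False
      have lt: "v2 (Suc p + j) < v2 (Suc p + j0)" using uniq[OF j False] j0 unfolding f_def by simp
      show ?thesis
      proof (cases "j < j0")
        case True
        have "v2 ((Suc p + j0) - (Suc p + j)) = v2 (Suc p + j)"
          by (rule v2_sub_less2) (use lt True in auto)
        then show ?thesis using True j by (simp add: fac_nth Wd_nth)
      next
        case F: False
        then have "j0 < j" using False by simp
        have "v2 ((Suc p + j) - (Suc p + j0)) = v2 (Suc p + j)"
          by (rule v2_sub_less) (use lt \<open>j0 < j\<close> in auto)
        then show ?thesis using F False j by (simp add: fac_nth Wd_nth)
      qed
    qed
  qed
  moreover have "gl M \<in> {X,Y,Z}" using gl_neq_A[OF M1] letter_XYZ by blast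
  ultimately show ?thesis using j0 by (auto intro!: image_eqI[where x="(j0, gl M)"])
qed

lemma exists_M: fixes L :: nat assumes "c \<in> {X,Y,Z}" shows "\<exists>M. gl M = c \<and> L < 2^M \<and> M \<ge> 1"
proof -
  define K :: nat where "K = 3 * L"
  have m: "K mod 3 = 0" "Suc K mod 3 = 1" "Suc (Suc K) mod 3 = 2" unfolding K_def by presburger+
  have "L < Suc K" unfolding K_def by simp
  have lt: "L < 2^(Suc K + i)" for i
  proof -
    have "L < Suc K + i" using \<open>L < Suc K\<close> by simp
    also have "\<dots> < 2^(Suc K + i)" by (rule less_exp)
    finally show ?thesis .
  qed
  have g: "gl (Suc K + 0) = X" "gl (Suc K + 1) = Y" "gl (Suc K + 2) = Z" using m by (simp_all add: cyc_def)
  from assms consider "c = X" | "c = Y" | "c = Z" by blast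
  then show ?thesis
  proof cases
    case 1 then show ?thesis using g(1) lt[of 0] by (intro exI[of _ "Suc K + 0"]) simp
  next
    case 2 then show ?thesis using g(2) lt[of 1] by (intro exI[of _ "Suc K + 1"]) simp
  next
    case 3 then show ?thesis using g(3) lt[of 2] by (intro exI[of _ "Suc K + 2"]) simp
  qed
qed

lemma Wd_in_fac: assumes "r < L" "c \<in> {X,Y,Z}" shows "Wd L (r,c) \<in> range (fac L)"
proof -
  obtain M where M: "gl M = c" "L < 2^M" using exists_M[OF assms(2)] by blast
  define p where "p = 2^M - Suc r"
  have "fac L p = Wd L (r,c)"
  proof (rule nth_equalityI)
    show "length (fac L p) = length (Wd L (r,c))" by simp
    fix j assume "j < length (fac L p)"
    then have j: "j < L" by simp
    have sp: "Suc p + j = 2^M - r + j" unfolding p_def using M(2) assms(1) by simp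
    consider "j = r" | "j < r" | "r < j" by linarith
    then show "fac L p ! j = Wd L (r,c) ! j"
    proof cases
      case 1 then show ?thesis using j M sp by (simp add: fac_nth Wd_nth)
    next
      case 2
      have "2^M - r + j = 2^M - (r - j)" using 2 M(2) assms(1) by simp
      moreover have "v2 (2^M - (r - j)) = v2 (r - j)" by (rule v2_pow_sub) (use 2 M(2) assms(1) in auto)
      ultimately show ?thesis using 2 j sp by (simp add: fac_nth Wd_nth)
    next
      case 3
      have "2^M - r + j = 2^M + (j - r)" using 3 M(2) assms(1) by simp
      moreover have "v2 (2^M + (j - r)) = v2 (j - r)" by (rule v2_pow_add) (use 3 M(2) j in auto)
      ultimately show ?thesis using 3 j sp by (simp add: fac_nth Wd_nth)
    qed
  qed
  then show ?thesis by (metis rangeI)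
qed

lemma range_fac_Wd: "L \<ge> 2 \<Longrightarrow> range (fac L) = Wd L ` ({0..<L} \<times> {X,Y,Z})"
  using fac_in_Wd Wd_in_fac by fastforce



lemma v2_2pow[simp]: "v2 (2 * 2^e) = Suc e" using v2_pow[of "Suc e"] by (simp del: v2_pow)

lemma Wd_eq_nth: "Wd L x = Wd L y \<Longrightarrow> j < L \<Longrightarrow> Wd L x ! j = Wd L y ! j" by simp

lemma Wd_coinc_nec:
  assumes eq: "Wd L (r,c) = Wd L (r',c')" and rr: "r < r'" "r' < L" and c': "c' \<noteq> A"
  shows "\<exists>e\<ge>1. r' = r + 2^e \<and> c = gl e \<and> c' = gl e \<and> r < 2^e \<and> L \<le> r + 2^Suc e"
proof -
  define d where "d = r' - r"
  define e where "e = v2 d"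
  have dpos: "d > 0" using rr unfolding d_def by simp
  have "Wd L (r,c) ! r' = Wd L (r',c') ! r'" using Wd_eq_nth[OF eq rr(2)] .
  then have c'e: "c' = gl e" using rr unfolding e_def d_def by (simp add: Wd_nth)
  have e1: "e \<ge> 1"
  proof (rule ccontr)
    assume "\<not> 1 \<le> e" then have "e = 0" by simp
    then show False using c' c'e by simp
  qed
  have "Wd L (r,c) ! r = Wd L (r',c') ! r" using Wd_eq_nth[OF eq] rr by simp
  then have ce: "c = gl e" using rr unfolding e_def d_def by (simp add: Wd_nth)
  obtain m where m: "odd m" "d = 2^e * m" using v2_decomp[OF dpos] unfolding e_def by blast
  have gne: "gl (Suc e) \<noteq> gl e" using gl_Suc_neq[OF e1] .
  have m1: "m = 1"
  proof (rule ccontr)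
    assume "m \<noteq> 1"
    then have "m \<ge> 3" using m(1) by presburger
    define m' where "m' = m - 2"
    have m': "m = m' + 2" "odd m'" unfolding m'_def using \<open>m \<ge> 3\<close> m(1) by presburger+
    define j where "j = r + 2^Suc e"
    have dd: "d = 2^Suc e + 2^e * m'" using m m' by (simp add: algebra_simps)
    have m'pos: "m' > 0" using m'(2) by (cases m') auto
    have "2^e * m' > 0" using m'pos by simp
    then have jr': "j < r'" using dd rr unfolding j_def d_def by linarith
    have "Wd L (r,c) ! j = gl (Suc e)" using jr' rr unfolding j_def by (simp add: Wd_nth)
    moreover have "Wd L (r',c') ! j = gl (v2 (2^e * m'))"
    proof -
      have "r' - j = 2^e * m'" using dd rr unfolding j_def d_def by linarith
      then show ?thesis using jr' rr by (simp add: Wd_nth)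
    qed
    moreover have "v2 (2^e * m') = e" using v2_mult_pow[OF m'(2)] .
    ultimately show False using Wd_eq_nth[OF eq, of j] jr' rr gne by simp
  qed
  have r'e: "r' = r + 2^e" using m m1 rr unfolding d_def by simp
  have rlt: "r < 2^e"
  proof (rule ccontr)
    assume "\<not> r < 2^e"
    define j where "j = r - 2^e"
    have "Wd L (r,c) ! j = gl e"
    proof -
      have p0: "(0::nat) < 2^e" by simp
      have "r - j = 2^e" using \<open>\<not> r < 2^e\<close> unfolding j_def by simp
      moreover have "j < r" "j \<noteq> r" using p0 \<open>\<not> r < 2^e\<close> unfolding j_def by linarith+
      ultimately show ?thesis using rr by (simp add: Wd_nth)
    qed
    moreover have "Wd L (r',c') ! j = gl (Suc e)"
    proof -
      have "r' - j = 2^Suc e" using \<open>\<not> r < 2^e\<close> r'e unfolding j_def by simp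
      moreover have "j < r'" using r'e \<open>\<not> r < 2^e\<close> zero_less_power[of "2::nat" e] unfolding j_def by linarith
      ultimately show ?thesis using rr by (simp add: Wd_nth del: power_Suc)
    qed
    moreover have "j < L" using rr unfolding j_def by simp
    ultimately show False using Wd_eq_nth[OF eq, of j] gne by simp
  qed
  have Lle: "L \<le> r + 2^Suc e"
  proof (rule ccontr)
    assume a: "\<not> L \<le> r + 2^Suc e"
    define j where "j = r + 2^Suc e"
    have "Wd L (r,c) ! j = gl (Suc e)"
    proof -
      have "j - r = 2^Suc e" unfolding j_def by simp
      moreover have "r < j" unfolding j_def by simp
      ultimately show ?thesis using a unfolding j_def by (simp add: Wd_nth del: power_Suc)
    qed
    moreover have "Wd L (r',c') ! j = gl e"
    proof -
      have "j - r' = 2^e" "r' < j" using r'e unfolding j_def by simp_all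
      then show ?thesis using a unfolding j_def by (simp add: Wd_nth del: power_Suc)
    qed
    ultimately show False using Wd_eq_nth[OF eq, of j] a gne unfolding j_def by simp
  qed
  show ?thesis using e1 r'e ce c'e rlt Lle by blast
qed

lemma Wd_coinc_suff:
  assumes "e \<ge> 1" "r < 2^e" "r + 2^e < L" "L \<le> r + 2^Suc e"
  shows "Wd L (r, gl e) = Wd L (r + 2^e, gl e)"
proof (rule nth_equalityI)
  show "length (Wd L (r, gl e)) = length (Wd L (r + 2^e, gl e))" by simp
  fix j assume "j < length (Wd L (r, gl e))"
  then have j: "j < L" by simp
  consider "j = r" | "j = r + 2^e" | "j < r" | "r < j \<and> j < r + 2^e" | "r + 2^e < j" by linarith
  then show "Wd L (r, gl e) ! j = Wd L (r + 2^e, gl e) ! j"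
  proof cases
    case 1 then show ?thesis using j by (simp add: Wd_nth)
  next
    case 2 then show ?thesis using j by (simp add: Wd_nth)
  next
    case 3
    have "v2 (2^e + (r - j)) = v2 (r - j)" by (rule v2_pow_add) (use 3 assms in linarith)+
    moreover have "r + 2^e - j = 2^e + (r - j)" using 3 by simp
    ultimately show ?thesis using 3 j by (simp add: Wd_nth)
  next
    case 4
    have "v2 (2^e - (j - r)) = v2 (j - r)" by (rule v2_pow_sub) (use 4 assms in linarith)+
    moreover have "r + 2^e - j = 2^e - (j - r)" using 4 by simp
    ultimately show ?thesis using 4 j by (simp add: Wd_nth)
  next
    case 5
    have p2: "(2::nat)^Suc e = 2*2^e" by simp
    define t where "t = j - (r + 2^e)"
    have tv: "v2 (2^e + t) = v2 t" unfolding t_def by (rule v2_pow_add) (use 5 assms j p2 in linarith)+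
    have jr: "j - r = 2^e + t" unfolding t_def using 5 by simp
    have A1: "Wd L (r, gl e) ! j = gl (v2 (j - r))" using 5 j by (simp add: Wd_nth)
    have A2: "Wd L (r + 2^e, gl e) ! j = gl (v2 t)" unfolding t_def using 5 j by (simp add: Wd_nth)
    show ?thesis unfolding A1 A2 jr tv ..
  qed
qed



lemma count_main:
  assumes n: "n = Suc m" "m \<ge> 1" "k < 2^n" and L: "L = 2^n + k"
  shows "card (Wd L ` ({0..<L} \<times> {X,Y,Z})) = 3*L - (k + (2^m - k))"
proof -
  define S where "S = {0..<L} \<times> {X,Y,Z}"
  define P1 where "P1 = (\<lambda>r. (r + 2^n, gl n)) ` {..<k}"
  define P2 where "P2 = (\<lambda>r. (r + 2^m, gl m)) ` {k..<2^m}"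
  define P where "P = P1 \<union> P2"
  have pn: "(2::nat)^n = 2*2^m" using n by simp
  have n1: "n \<ge> 1" using n by simp
  have gnm: "gl n \<noteq> gl m" using gl_Suc_neq[OF n(2)] n by simp
  have gn: "gl n \<in> {X,Y,Z}" using gl_neq_A[OF n1] letter_XYZ by blast
  have gm: "gl m \<in> {X,Y,Z}" using gl_neq_A[OF n(2)] letter_XYZ by blast
  have finS: "finite S" unfolding S_def by simp
  have PS: "P \<subseteq> S"
  proof
    fix x assume "x \<in> P"
    then show "x \<in> S"
    proof (cases "x \<in> P1")
      case True
      then obtain r where "r < k" "x = (r + 2^n, gl n)" unfolding P1_def by auto
      then show ?thesis using gn L unfolding S_def by auto
    next
      case False
      then have "x \<in> P2" using \<open>x \<in> P\<close> unfolding P_def by auto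
      then obtain r where "k \<le> r" "r < 2^m" "x = (r + 2^m, gl m)" unfolding P2_def by auto
      then show ?thesis using gm L pn unfolding S_def by auto
    qed
  qed
  have notP1: "(r, gl n) \<notin> P" if "r < k" for r
  proof
    assume "(r, gl n) \<in> P"
    then show False
    proof (cases "(r, gl n) \<in> P1")
      case True
      then obtain r'' where "r = r'' + 2^n" unfolding P1_def by auto
      then show False using that n(3) by linarith
    next
      case False
      then have "(r, gl n) \<in> P2" using \<open>(r, gl n) \<in> P\<close> unfolding P_def by auto
      then show False using gnm unfolding P2_def by auto
    qed
  qed
  have notP2: "(r, gl m) \<notin> P" if "r < 2^m" for r
  proof
    assume "(r, gl m) \<in> P"
    then show False
    proof (cases "(r, gl m) \<in> P1")
      case True
      then show False using gnm unfolding P1_def by auto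
    next
      case False
      then have "(r, gl m) \<in> P2" using \<open>(r, gl m) \<in> P\<close> unfolding P_def by auto
      then obtain r'' where "r = r'' + 2^m" unfolding P2_def by auto
      then show False using that by linarith
    qed
  qed
  have img: "Wd L ` S = Wd L ` (S - P)"
  proof
    show "Wd L ` (S - P) \<subseteq> Wd L ` S" by auto
    show "Wd L ` S \<subseteq> Wd L ` (S - P)"
    proof
      fix w assume "w \<in> Wd L ` S"
      then obtain x where x: "x \<in> S" "w = Wd L x" by blast
      show "w \<in> Wd L ` (S - P)"
      proof (cases "x \<in> P")
        case False then show ?thesis using x by blast
      next
        case True
        show ?thesis
        proof (cases "x \<in> P1")
          case True
          then obtain r where r: "r < k" "x = (r + 2^n, gl n)" unfolding P1_def by auto
          have "Wd L (r, gl n) = Wd L (r + 2^n, gl n)"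
            by (rule Wd_coinc_suff) (use n1 r(1) n(3) L pn in simp_all)
          moreover have "(r, gl n) \<in> S - P" using notP1[OF r(1)] r(1) gn L unfolding S_def by auto
          ultimately have "w = Wd L (r, gl n)" "(r, gl n) \<in> S - P" using x r by auto
          then show ?thesis by blast
        next
          case False
          then have "x \<in> P2" using \<open>x \<in> P\<close> unfolding P_def by auto
          then obtain r where r: "k \<le> r" "r < 2^m" "x = (r + 2^m, gl m)" unfolding P2_def by auto
          have "Wd L (r, gl m) = Wd L (r + 2^m, gl m)"
            by (rule Wd_coinc_suff) (use n(2) r L pn in simp_all)
          moreover have "(r, gl m) \<in> S - P" using notP2[OF r(2)] r gm L pn unfolding S_def by auto
          ultimately have "w = Wd L (r, gl m)" "(r, gl m) \<in> S - P" using x r by auto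
          then show ?thesis by blast
        qed
      qed
    qed
  qed
  have H: "(r',c') \<in> P" if eq: "Wd L (r,c) = Wd L (r',c')" and rr: "r < r'" "r' < L" and c': "c' \<noteq> A" for r r' c c'
  proof -
    obtain e where e: "e \<ge> 1" "r' = r + 2^e" "c' = gl e" "r < 2^e" "L \<le> r + 2^Suc e"
      using Wd_coinc_nec[OF eq rr c'] by blast
    have pe: "(2::nat)^Suc e = 2*2^e" by simp
    have le: "e \<le> n"
    proof (rule ccontr)
      assume "\<not> e \<le> n"
      then have "2^Suc n \<le> (2::nat)^e" by (intro power_increasing) simp_all
      then show False using e(2) rr(2) L n(3) by simp
    qed
    have ge: "m \<le> e"
    proof (rule ccontr)
      assume "\<not> m \<le> e"
      then have "2^Suc (Suc e) \<le> (2::nat)^n" using n(1) by (intro power_increasing) simp_all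
      then show False using e(4,5) L pe by simp
    qed
    have "e = n \<or> e = m" using le ge n(1) by linarith
    then show ?thesis
    proof
      assume en: "e = n"
      then have "r < k" using e(2) rr(2) L by simp
      then show ?thesis using e en unfolding P_def P1_def by auto
    next
      assume em: "e = m"
      then have "k \<le> r" using e(5) L n(1) by simp
      moreover have "r < 2^m" using e(4) em by simp
      ultimately show ?thesis using e em unfolding P_def P2_def by auto
    qed
  qed
  have inj: "inj_on (Wd L) (S - P)"
  proof (rule inj_onI)
    fix x y assume x: "x \<in> S - P" and y: "y \<in> S - P" and eq: "Wd L x = Wd L y"
    obtain r c where xr: "x = (r,c)" by fastforce
    obtain r' c' where yr: "y = (r',c')" by fastforce
    have rL: "r < L" "r' < L" and cA: "c \<noteq> A" "c' \<noteq> A" using x y xr yr unfolding S_def by auto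
    consider "r = r'" | "r < r'" | "r' < r" by linarith
    then show "x = y"
    proof cases
      case 1
      have "Wd L (r,c) ! r = Wd L (r',c') ! r" using eq xr yr by simp
      then have "c = c'" using 1 rL by (simp add: Wd_nth)
      then show ?thesis using 1 xr yr by simp
    next
      case 2
      then have "(r',c') \<in> P" using H[of r c r' c'] eq xr yr rL cA by simp
      then show ?thesis using y yr by simp
    next
      case 3
      then have "(r,c) \<in> P" using H[of r' c' r c] eq xr yr rL cA by simp
      then show ?thesis using x xr by simp
    qed
  qed
  have cardS: "card S = 3 * L" unfolding S_def by (simp add: card_cartesian_product)
  have cardP1: "card P1 = k" unfolding P1_def by (subst card_image) (auto simp: inj_on_def)
  have cardP2: "card P2 = 2^m - k" unfolding P2_def by (subst card_image) (auto simp: inj_on_def)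
  have disj: "P1 \<inter> P2 = {}" using gnm unfolding P1_def P2_def by auto
  have cardP: "card P = k + (2^m - k)" unfolding P_def
    using card_Un_disjoint[of P1 P2] disj cardP1 cardP2 unfolding P1_def P2_def by simp
  have finP: "finite P" using PS finS finite_subset by blast
  have "card (Wd L ` S) = card (S - P)" unfolding img by (rule card_image[OF inj])
  also have "\<dots> = card S - card P" by (rule card_Diff_subset[OF finP PS])
  finally show ?thesis unfolding S_def cardS cardP using cardS cardP unfolding S_def by simp
qed



lemma complexity_Wd: "L \<ge> 2 \<Longrightarrow> complexity L = card (Wd L ` ({0..<L} \<times> {X,Y,Z}))"
  unfolding complexity_def using Sub_tau_len[of L] range_fac_Wd[of L] by simp

lemma v2_1: "v2 (Suc 0) = 0" using v2_pow[of 0] by simp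
lemma v2_2: "v2 (Suc (Suc 0)) = Suc 0" using v2_pow[of 1] by (simp add: numeral_2_eq_2)

lemma v2_2n: "v2 2 = Suc 0" using v2_pow[of 1] by simp

lemma c1: "complexity 1 = 4"
proof -
  have "range (fac 1) = {[A],[X],[Y],[Z]}"
  proof
    show "range (fac 1) \<subseteq> {[A],[X],[Y],[Z]}"
    proof
      fix w assume "w \<in> range (fac 1)"
      then obtain p where "w = [uw p]" using fac1 by auto
      then show "w \<in> {[A],[X],[Y],[Z]}" by (cases "uw p") auto
    qed
    have "uw 0 = A" unfolding uw_def using v2_1 by simp
    then show "{[A],[X],[Y],[Z]} \<subseteq> range (fac 1)" using uw1 uw3 uw7 fac1
      by (metis empty_subsetI insert_subset rangeI)
  qed
  then show ?thesis unfolding complexity_def using Sub_tau_len[of 1] by simp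
qed

lemma c2: "complexity 2 = 6"
proof -
  have e: "{0..<2::nat} \<times> {X,Y,Z} = {(0,X),(0,Y),(0,Z),(1,X),(1,Y),(1,Z)}" by auto
  show ?thesis unfolding complexity_Wd[of 2, simplified] e
    by (simp add: Wd_def v2_1 eval_nat_numeral cyc_def)
qed

lemma c3: "complexity 3 = 8"
proof -
  have e: "{0..<3::nat} \<times> {X,Y,Z} = {(0,X),(0,Y),(0,Z),(1,X),(1,Y),(1,Z),(2,X),(2,Y),(2,Z)}" by auto
  have i: "Wd 3 ` {(0,X),(0,Y),(0,Z),(1,X),(1,Y),(1,Z),(2,X),(2,Y),(2,Z)} = {[X,A,X],[Y,A,X],[Z,A,X],[A,X,A],[A,Y,A],[A,Z,A],[X,A,Y],[X,A,Z]}"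
    by (simp add: Wd_def v2_1 v2_2 v2_2n upt_rec cyc_def insert_commute)
  show ?thesis unfolding complexity_Wd[of 3, simplified] e i by simp
qed

theorem theorem1:
  shows "complexity 1 = 4 \<and> complexity 2 = 6 \<and> complexity 3 = 8 \<and>
    (\<forall>n k. n \<ge> 2 \<longrightarrow> k < 2 ^ n \<longrightarrow>
       complexity (2 ^ n + k) =
         (if k < 2 ^ (n - 1) then 2 ^ (n + 1) + 2 ^ (n - 1) + 3 * k
          else 2 ^ (n + 1) + 2 ^ n + 2 * k))"
proof (intro conjI allI impI)
  show "complexity 1 = 4" by (rule c1)
  show "complexity 2 = 6" by (rule c2)
  show "complexity 3 = 8" by (rule c3)
  fix n k :: nat assume n2: "n \<ge> 2" and k: "k < 2^n"
  define m where "m = n - 1"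
  have nm: "n = Suc m" "m \<ge> 1" using n2 unfolding m_def by auto
  have "(2::nat)^2 \<le> 2^n" using n2 by (intro power_increasing) simp_all
  then have L2: "2^n + k \<ge> 2" by simp
  have cm: "complexity (2^n + k) = 3*(2^n+k) - (k + (2^m - k))"
    unfolding complexity_Wd[OF L2] by (rule count_main[OF nm k refl])
  have pn: "(2::nat)^n = 2*2^m" "(2::nat)^(n+1) = 4*2^m" "n - 1 = m" using nm by simp_all
  show "complexity (2 ^ n + k) =
         (if k < 2 ^ (n - 1) then 2 ^ (n + 1) + 2 ^ (n - 1) + 3 * k
          else 2 ^ (n + 1) + 2 ^ n + 2 * k)"
  proof -
    have c: "complexity (2^n+k) = 3*(2*2^m+k) - (k + (2^m - k))" using cm pn(1) by simp
    show ?thesis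
    proof (cases "k < 2^m")
      case True
      then show ?thesis unfolding c pn(2) pn(3) by simp
    next
      case False
      then show ?thesis unfolding c pn(2) pn(3) using pn(1) by simp
    qed
  qed
qed

end
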